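(* For no $\lambda\in\mathbb{C}$ does the equation $-w''(x)+P(x)w(x)=\lambda w(x)$ on $(0,\infty)$ have a nonzero solution $w\in L^2(0,\infty)$. In particular the self-adjoint operator $A=-\frac{d^2}{dx^2}+P(x)$ on $L^2(0,\infty)$, with domain $\{w\in L^2(0,\infty): w,w'\text{ locally absolutely continuous},\ Aw\in L^2(0,\infty)\}$, has no eigenvalues.
   Context: $P(x)=\dfrac{e^{4x}+10e^{2x}+1}{4(e^{2x}-1)^2}$ for $x>0$. *)

theory Defs
  imports "HOL-Analysis.Analysis"
begin

definition P :: "real \<Rightarrow> real" where
  "P x = (exp (4*x) + 10 * exp (2*x) + 1) / (4 * (exp (2*x) - 1)^2)"

end

theory Submission
  imports Defs "HOL-Real_Asymp.Real_Asymp"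
begin


lemma mono_aux:
  fixes F F' :: "real \<Rightarrow> real"
  assumes "a \<le> b" "continuous_on {a..b} F"
    "\<And>x. a < x \<Longrightarrow> x < b \<Longrightarrow> (F has_real_derivative F' x) (at x)"
    "\<And>x. a < x \<Longrightarrow> x < b \<Longrightarrow> F' x \<ge> 0"
  shows "F a \<le> F b"
  by (rule DERIV_nonneg_imp_increasing_open[OF assms(1) _ assms(2)]) (use assms(3,4) in blast)

lemma sinh_ge: assumes "0 \<le> (t::real)" shows "t \<le> sinh t"
proof -
  have d: "((\<lambda>x. sinh x - x) has_real_derivative cosh x - 1) (at x)" for x
    by (rule derivative_eq_intros refl)+ simp
  have c: "continuous_on {0..t} (\<lambda>x. sinh x - x)" by (intro continuous_intros)
  have "(\<lambda>x. sinh x - x) 0 \<le> (\<lambda>x. sinh x - x) t"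
    by (rule mono_aux[OF assms c d]) (use cosh_real_ge_1 in simp)
  then show ?thesis by simp
qed

lemma sinh_le: assumes "0 \<le> (t::real)" shows "sinh t \<le> t * cosh t"
proof -
  have d: "((\<lambda>x. x * cosh x - sinh x) has_real_derivative x * sinh x) (at x)" for x
    by (rule derivative_eq_intros refl)+ simp
  have c: "continuous_on {0..t} (\<lambda>x. x * cosh x - sinh x)" by (intro continuous_intros)
  have "(\<lambda>x. x * cosh x - sinh x) 0 \<le> (\<lambda>x. x * cosh x - sinh x) t"
    by (rule mono_aux[OF assms c d]) simp
  then show ?thesis by simp
qed

lemma int_cont:
  fixes f :: "real \<Rightarrow> real"
  assumes "0 < a" "continuous_on {0<..} f"
  shows "continuous_on {a..b} (\<lambda>t. integral {a..t} f)"
proof -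
  have "continuous_on {a..b} f" using assms(2) by (rule continuous_on_subset) (use assms(1) in auto)
  then show ?thesis by (intro indefinite_integral_continuous_1 integrable_continuous_interval)
qed

lemma int_deriv:
  fixes f :: "real \<Rightarrow> real"
  assumes "0 < a" "a < x" "continuous_on {0<..} f"
  shows "((\<lambda>t. integral {a..t} f) has_real_derivative f x) (at x)"
proof -
  have c: "continuous_on {a..x+1} f" using assms(3) by (rule continuous_on_subset) (use assms(1) in auto)
  have "((\<lambda>t. integral {a..t} f) has_real_derivative f x) (at x within {a..x+1})"
    by (rule integral_has_real_derivative[OF c]) (use assms in simp)
  moreover have "x \<in> interior {a..x+1}" using assms by (simp add: interior_atLeastAtMost_real)
  ultimately show ?thesis using at_within_interior by metis
qed

lemma int_le:
  fixes f :: "real \<Rightarrow> real"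
  assumes "continuous_on {0<..} f" "\<And>x. x > 0 \<Longrightarrow> 0 \<le> f x" "set_integrable lborel {0<..} f" "0 < a"
  shows "integral {a..b} f \<le> integral {0<..} f" "0 \<le> integral {a..b} f"
proof -
  have c: "continuous_on {a..b} f" using assms(1) by (rule continuous_on_subset) (use assms(4) in auto)
  have i: "f integrable_on {a..b}" by (rule integrable_continuous_interval[OF c])
  show "integral {a..b} f \<le> integral {0<..} f"
  proof (rule integral_subset_le[OF _ i set_borel_integral_eq_integral(1)[OF assms(3)]])
    show "{a..b} \<subseteq> {0<..}" using assms(4) by auto
    show "\<forall>x\<in>{0<..}. 0 \<le> f x" using assms(2) by simp
  qed
  show "0 \<le> integral {a..b} f" 
    by (rule integral_nonneg[OF i]) (use assms(2,4) in simp)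
qed

lemma P_eq: assumes "x > 0" shows "P x = 1/4 + 3/(4*(sinh x)^2)"
proof -
  define E where "E = exp x"
  have E1: "E > 1" using assms by (simp add: E_def)
  have e2: "exp (2*x) = E^2" "exp (4*x) = E^4" unfolding E_def
    by (simp_all add: exp_of_nat_mult[symmetric] mult.commute)
  have s: "sinh x = (E - inverse E)/2" by (simp add: E_def sinh_def exp_minus)
  have "E^2 > 1" using E1 by (simp add: one_less_power)
  then have q: "(E^2-1)^2 > 0" by simp
  have d: "4 + E*(E*(E*(E*4))) - E*(E*8) = 4*(E^2-1)^2" by algebra
  have d2: "4 + E*(E*(E*(E*4))) - E*(E*8) \<noteq> 0" using d q by simp
  show ?thesis unfolding P_def e2 s using E1 q d2
    by (simp add: field_simps power2_eq_square) (simp add: algebra_simps power2_eq_square power4_eq_xxxx)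
qed


locale sol =
  fixes w w' w'' :: "real \<Rightarrow> complex" and lam :: complex
  assumes d1: "\<And>x. x > 0 \<Longrightarrow> (w has_vector_derivative w' x) (at x)"
    and d2: "\<And>x. x > 0 \<Longrightarrow> (w' has_vector_derivative w'' x) (at x)"
    and eq: "\<And>x. x > 0 \<Longrightarrow> - w'' x + complex_of_real (P x) * w x = lam * w x"
    and L2: "set_integrable lborel {0<..} (\<lambda>x. (cmod (w x))\<^sup>2)"
begin

definition f :: "real \<Rightarrow> real" where "f x = (cmod (w x))\<^sup>2"
definition h :: "real \<Rightarrow> complex" where "h x = cnj (w x) * w' x"
definition M :: real where "M = integral {0<..} f"

lemma w2: "x > 0 \<Longrightarrow> w'' x = (of_real (P x) - lam) * w x"
  using eq[of x] by (simp add: algebra_simps)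

lemma cont_w: "continuous_on {0<..} w"
  by (rule continuous_at_imp_continuous_on) (use d1 has_vector_derivative_continuous in blast)

lemma cont_w': "continuous_on {0<..} w'"
  by (rule continuous_at_imp_continuous_on) (use d2 has_vector_derivative_continuous in blast)

lemma f_cont: "continuous_on {0<..} f"
  unfolding f_def by (intro continuous_intros cont_w)

lemma w'sq_cont: "continuous_on {0<..} (\<lambda>x. (cmod (w' x))\<^sup>2)"
  by (intro continuous_intros cont_w')

lemma f_nonneg: "0 \<le> f x" unfolding f_def by simp

lemma f_L2: "set_integrable lborel {0<..} f"
  using L2 unfolding f_def[abs_def] .

lemma F_le: "0 < a \<Longrightarrow> integral {a..b} f \<le> M" "0 < a \<Longrightarrow> 0 \<le> integral {a..b} f"
  unfolding M_def using int_le[OF f_cont _ f_L2] f_nonneg by auto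

lemma cnj_sq: "cnj z * z = complex_of_real ((cmod z)\<^sup>2)"
  by (metis complex_norm_square mult.commute)

lemma h_deriv: assumes "x > 0"
  shows "(h has_vector_derivative (of_real ((cmod (w' x))\<^sup>2 + (P x - Re lam) * f x) - \<i> * of_real (Im lam * f x))) (at x)"
proof -
  have "((\<lambda>x. cnj (w x) * w' x) has_vector_derivative (cnj (w x) * w'' x + cnj (w' x) * w' x)) (at x)"
    by (rule derivative_eq_intros d1 d2 assms refl)+
  moreover have "cnj (w x) * w'' x + cnj (w' x) * w' x = of_real ((cmod (w' x))\<^sup>2 + (P x - Re lam) * f x) - \<i> * of_real (Im lam * f x)"
  proof -
    have "cnj (w x) * w'' x = (of_real (P x) - lam) * (cnj (w x) * w x)" by (simp add: w2[OF assms] algebra_simps)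
    also have "\<dots> = (of_real (P x) - lam) * of_real (f x)" by (simp add: cnj_sq f_def)
    finally have A: "cnj (w x) * w'' x = (of_real (P x) - lam) * of_real (f x)" .
    have B: "cnj (w' x) * w' x = of_real ((cmod (w' x))\<^sup>2)" by (rule cnj_sq)
    show ?thesis unfolding A B by (simp add: complex_eq_iff algebra_simps del: of_real_power)
  qed
  ultimately show ?thesis unfolding h_def[abs_def] by simp
qed

lemma Reh_deriv: "x > 0 \<Longrightarrow> ((\<lambda>x. Re (h x)) has_real_derivative (cmod (w' x))\<^sup>2 + (P x - Re lam) * f x) (at x)"
  using has_field_derivative_Re[OF h_deriv] by simp

lemma Imh_deriv: "x > 0 \<Longrightarrow> ((\<lambda>x. Im (h x)) has_real_derivative - (Im lam * f x)) (at x)"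
  using has_field_derivative_Im[OF h_deriv] by simp

lemma f_deriv: assumes "x > 0" shows "(f has_real_derivative 2 * Re (h x)) (at x)"
proof -
  have "((\<lambda>x. cnj (w x) * w x) has_vector_derivative (cnj (w x) * w' x + cnj (w' x) * w x)) (at x)"
    by (rule derivative_eq_intros d1 d2 assms refl)+
  from has_field_derivative_Re[OF this]
  have "((\<lambda>x. Re (cnj (w x) * w x)) has_real_derivative 2 * Re (h x)) (at x)"
    by (simp add: h_def)
  moreover have "(\<lambda>x. Re (cnj (w x) * w x)) = f" by (simp add: fun_eq_iff cnj_sq f_def)
  ultimately show ?thesis by simp
qed

lemma h_norm: "cmod (h x) = cmod (w x) * cmod (w' x)"
  by (simp add: h_def norm_mult)

end


definition rr :: "real \<Rightarrow> real" where "rr t = sqrt (sinh t)"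
definition rho1 :: "real \<Rightarrow> real" where "rho1 t = 1 / rr t"
definition rho2 :: "real \<Rightarrow> real" where "rho2 t = cosh t / (2 * sinh t * rr t)"

lemma rr_pos: "t > 0 \<Longrightarrow> rr t > 0" by (simp add: rr_def)
lemma rr_sq: "t > 0 \<Longrightarrow> (rr t)^2 = sinh t" by (simp add: rr_def)

lemma sinh_d: "(sinh has_real_derivative cosh t) (at t)"
  using has_field_derivative_sinh[OF DERIV_ident] by simp
lemma cosh_d: "(cosh has_real_derivative sinh t) (at t)"
  using has_field_derivative_cosh[OF DERIV_ident] by simp

lemma rr_deriv: assumes "t > 0" shows "(rr has_real_derivative cosh t / (2 * rr t)) (at t)"
proof -
  have "((\<lambda>t. sqrt (sinh t)) has_real_derivative inverse (sqrt (sinh t)) / 2 * cosh t) (at t)"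
    by (rule DERIV_chain2[OF DERIV_real_sqrt sinh_d]) (use assms in simp)
  then show ?thesis unfolding rr_def[abs_def] by (simp add: field_simps)
qed

lemma rho1_deriv: assumes "t > 0" shows "(rho1 has_real_derivative - rho2 t) (at t)"
proof -
  have r: "rr t > 0" "(rr t)^2 = sinh t" using rr_pos[OF assms] rr_sq[OF assms] by auto
  from DERIV_quotient[OF DERIV_const rr_deriv[OF assms], of 1] r
  have "((\<lambda>t. 1 / rr t) has_real_derivative (0 * rr t - cosh t / (2 * rr t) * 1) / rr t ^ Suc (Suc 0)) (at t)"
    by simp
  then show ?thesis unfolding rho1_def[abs_def]
    by (rule DERIV_cong) (use r in \<open>simp add: rho2_def field_simps power2_eq_square\<close>)
qed

lemma rho2_deriv: assumes "t > 0"
  shows "(rho2 has_real_derivative 1 / (2 * rr t) - 3 * (cosh t)^2 / (4 * (sinh t)^2 * rr t)) (at t)"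
proof -
  have s: "sinh t > 0" using assms by simp
  have r: "rr t > 0" "(rr t)^2 = sinh t" using rr_pos[OF assms] rr_sq[OF assms] by auto
  have den: "((\<lambda>t. 2 * sinh t * rr t) has_real_derivative 2 * cosh t * rr t + 2 * sinh t * (cosh t / (2 * rr t))) (at t)"
    by (rule DERIV_cong[OF DERIV_mult[OF DERIV_cmult[OF sinh_d] rr_deriv[OF assms]]]) simp
  from DERIV_quotient[OF cosh_d den] s r
  have "((\<lambda>t. cosh t / (2 * sinh t * rr t)) has_real_derivative
     (sinh t * (2 * sinh t * rr t) - (2 * cosh t * rr t + 2 * sinh t * (cosh t / (2 * rr t))) * cosh t) / (2 * sinh t * rr t) ^ Suc (Suc 0)) (at t)"
    by simp
  then show ?thesis unfolding rho2_def[abs_def]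
  proof (rule DERIV_cong)
    have rs: "rr t * rr t = sinh t" using r by (simp add: power2_eq_square)
    show "(sinh t * (2 * sinh t * rr t) - (2 * cosh t * rr t + 2 * sinh t * (cosh t / (2 * rr t))) * cosh t) / (2 * sinh t * rr t) ^ Suc (Suc 0)
     = 1 / (2 * rr t) - 3 * (cosh t)^2 / (4 * (sinh t)^2 * rr t)"
      using s r by (simp add: field_simps power2_eq_square rs)
  qed
qed


lemma key_id: assumes "t > 0" shows "P t * rho1 t + (1 / (2 * rr t) - 3 * (cosh t)^2 / (4 * (sinh t)^2 * rr t)) = 0"
proof -
  have s: "sinh t > 0" using assms by simp
  have r: "rr t > 0" using rr_pos[OF assms] by auto
  have c: "(cosh t)^2 = (sinh t)^2 + 1" by (rule cosh_square_eq)
  show ?thesis unfolding P_eq[OF assms] rho1_def c using s r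
    by (simp add: field_simps)
qed

context sol begin

definition g :: "real \<Rightarrow> complex" where "g t = w' t * of_real (rho1 t) + w t * of_real (rho2 t)"
definition v :: "real \<Rightarrow> complex" where "v t = w t * of_real (rr t)"

lemma g_deriv: assumes "t > 0" shows "(g has_vector_derivative - lam * w t * of_real (rho1 t)) (at t)"
proof -
  have "(g has_vector_derivative (w' t * of_real (- rho2 t) + w'' t * of_real (rho1 t)) +
      (w t * of_real (1 / (2 * rr t) - 3 * (cosh t)^2 / (4 * (sinh t)^2 * rr t)) + w' t * of_real (rho2 t))) (at t)"
    unfolding g_def[abs_def]
    by (intro has_vector_derivative_add has_vector_derivative_mult has_vector_derivative_of_real
        d1 d2 assms rho1_deriv rho2_deriv)
  moreover have "(w' t * of_real (- rho2 t) + w'' t * of_real (rho1 t)) +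
      (w t * of_real (1 / (2 * rr t) - 3 * (cosh t)^2 / (4 * (sinh t)^2 * rr t)) + w' t * of_real (rho2 t))
     = - lam * w t * of_real (rho1 t)"
  proof -
    have k: "of_real (1 / (2 * rr t) - 3 * (cosh t)^2 / (4 * (sinh t)^2 * rr t)) = - complex_of_real (P t * rho1 t)"
    proof -
      have kr: "1 / (2 * rr t) - 3 * (cosh t)^2 / (4 * (sinh t)^2 * rr t) = - (P t * rho1 t)"
        using key_id[OF assms] by linarith
      show ?thesis by (simp only: kr of_real_minus)
    qed
    show ?thesis unfolding k w2[OF assms] by (simp add: algebra_simps)
  qed
  ultimately show ?thesis by simp
qed

lemma v_deriv: assumes "t > 0" shows "(v has_vector_derivative of_real (sinh t) * g t) (at t)"
proof -
  have "(v has_vector_derivative (w t * of_real (cosh t / (2 * rr t)) + w' t * of_real (rr t))) (at t)"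
    unfolding v_def[abs_def]
    by (intro has_vector_derivative_mult has_vector_derivative_of_real d1 assms rr_deriv)
  moreover have "w t * of_real (cosh t / (2 * rr t)) + w' t * of_real (rr t) = of_real (sinh t) * g t"
  proof -
    have s: "sinh t > 0" using assms by simp
    have r: "rr t > 0" "rr t * rr t = sinh t" using rr_pos[OF assms] rr_sq[OF assms] by (auto simp: power2_eq_square)
    have e1: "sinh t * rho1 t = rr t" using r unfolding rho1_def by (simp add: field_simps)
    have e2: "sinh t * rho2 t = cosh t / (2 * rr t)" using s r unfolding rho2_def by (simp add: field_simps)
    have "of_real (sinh t) * g t = w' t * of_real (sinh t * rho1 t) + w t * of_real (sinh t * rho2 t)"
      by (simp add: g_def algebra_simps)
    also have "\<dots> = w t * of_real (cosh t / (2 * rr t)) + w' t * of_real (rr t)"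
      unfolding e1 e2 by (simp add: algebra_simps)
    finally show ?thesis by simp
  qed
  ultimately show ?thesis by simp
qed

end


context sol begin

lemma g_cont: assumes "0 < a" shows "continuous_on {a..b} g"
proof (rule continuous_on_vector_derivative)
  fix x assume x: "x \<in> {a..b}"
  then have "x > 0" using assms by auto
  then show "(g has_vector_derivative - lam * w x * of_real (rho1 x)) (at x within {a..b})"
    by (rule has_vector_derivative_at_within[OF g_deriv])
qed

lemma v_cont: assumes "0 < a" shows "continuous_on {a..b} v"
proof (rule continuous_on_vector_derivative)
  fix x assume x: "x \<in> {a..b}"
  then have "x > 0" using assms by auto
  then show "(v has_vector_derivative of_real (sinh x) * g x) (at x within {a..b})"
    by (rule has_vector_derivative_at_within[OF v_deriv])
qed

lemma v_norm: "t > 0 \<Longrightarrow> cmod (v t) = cmod (w t) * rr t"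
  unfolding v_def using rr_pos[of t] by (simp add: norm_mult)

lemma amgm_real: "(x::real) * y \<le> (x^2 + y^2) / 2"
proof -
  have "(x - y)^2 = x^2 + y^2 - 2*(x*y)" by (simp add: power2_diff)
  then have "0 \<le> x^2 + y^2 - 2*(x*y)" using zero_le_power2[of "x - y"] by simp
  then show ?thesis by simp
qed

lemma g'_bound: assumes "t > 0"
  shows "cmod (- lam * w t * of_real (rho1 t)) \<le> cmod lam / 2 * (f t + 1 / t)"
proof -
  have r: "rr t > 0" "(rr t)^2 = sinh t" using rr_pos[OF assms] rr_sq[OF assms] by auto
  have "cmod (- lam * w t * of_real (rho1 t)) = cmod lam * (cmod (w t) * (1 / rr t))"
    using r by (simp add: norm_mult norm_divide rho1_def)
  also have "cmod (w t) * (1 / rr t) \<le> (f t + 1 / t) / 2"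
  proof -
    have "cmod (w t) * (1 / rr t) \<le> ((cmod (w t))^2 + (1 / rr t)^2) / 2"
      by (rule amgm_real)
    also have "(1 / rr t)^2 = 1 / sinh t" using r by (simp add: power_divide)
    also have "1 / sinh t \<le> 1 / t"
    proof (rule divide_left_mono)
      show "t \<le> sinh t" using sinh_ge[of t] assms by simp
      show "0 < sinh t * t" using assms by simp
    qed simp
    finally show ?thesis unfolding f_def by simp
  qed
  then have "cmod lam * (cmod (w t) * (1 / rr t)) \<le> cmod lam * ((f t + 1 / t) / 2)"
    by (intro mult_left_mono) auto
  finally show ?thesis by simp
qed

lemma g_bound: assumes x3: "x3 > 0" and a: "0 < a" "a \<le> x3"
  shows "cmod (g a) \<le> cmod (g x3) + cmod lam / 2 * M + cmod lam / 2 * (ln x3 - ln a)"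
proof (cases "a = x3")
  case True then show ?thesis using F_le[of x3 x3] x3 by simp
next
  case False
  then have ax: "a < x3" using a by simp
  define B where "B = cmod lam / 2"
  define phi where "phi t = B * (integral {a..t} f + ln t)" for t
  have "norm (g x3 - g a) \<le> phi x3 - phi a"
  proof (rule differentiable_bound_general[OF ax])
    show "continuous_on {a..x3} g" by (rule g_cont[OF a(1)])
    have "continuous_on {a..x3} ln" by (rule continuous_on_ln[OF continuous_on_id]) (use a in auto)
    then show "continuous_on {a..x3} phi" unfolding phi_def
      by (intro continuous_on_mult continuous_on_const continuous_on_add int_cont[OF a(1) f_cont])
    fix x assume x: "a < x" "x < x3"
    show "(g has_vector_derivative - lam * w x * of_real (rho1 x)) (at x)" using x a by (intro g_deriv) auto
    have dl: "DERIV ln x :> inverse x" using x a by (intro DERIV_ln) auto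
    have "(phi has_real_derivative B * (f x + 1 / x)) (at x)" unfolding phi_def
      by (rule DERIV_cong[OF DERIV_cmult[OF DERIV_add[OF int_deriv[OF a(1) x(1) f_cont] dl]]])
         (simp add: divide_inverse)
    then show "(phi has_vector_derivative B * (f x + 1 / x)) (at x)"
      by (simp add: has_real_derivative_iff_has_vector_derivative)
    show "norm (- lam * w x * of_real (rho1 x)) \<le> B * (f x + 1 / x)"
      unfolding B_def using g'_bound[of x] x a by simp
  qed
  moreover have "phi x3 - phi a \<le> B * M + B * (ln x3 - ln a)"
  proof -
    have "integral {a..x3} f \<le> M" using F_le a by simp
    then have "B * integral {a..x3} f \<le> B * M" unfolding B_def by (intro mult_left_mono) auto
    then show ?thesis unfolding phi_def by (simp add: algebra_simps)
  qed
  moreover have "cmod (g a) \<le> cmod (g x3) + norm (g x3 - g a)"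
    by (metis norm_minus_commute norm_triangle_sub add.commute)
  ultimately show ?thesis unfolding B_def by linarith
qed

end


context sol begin

lemma v_small:
  assumes eps: "\<epsilon> > 0" and t1: "t1 > 0" and vd: "\<And>t. 0 < t \<Longrightarrow> t \<le> t1 \<Longrightarrow> sinh t * cmod (g t) \<le> \<epsilon>"
    and b: "0 < b" "b \<le> t1"
  shows "cmod (v b) \<le> \<epsilon> * b"
proof (rule ccontr)
  assume "\<not> cmod (v b) \<le> \<epsilon> * b"
  define c0 where "c0 = cmod (v b) - \<epsilon> * b"
  have c0: "c0 > 0" using \<open>\<not> _\<close> unfolding c0_def by simp
  have vlow: "cmod (v a) \<ge> c0" if a: "0 < a" "a \<le> b" for a
  proof (cases "a = b")
    case True then show ?thesis using eps b unfolding c0_def by simp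
  next
    case False
    then have ab: "a < b" using a by simp
    have "norm (v b - v a) \<le> \<epsilon> * b - \<epsilon> * a"
    proof (rule differentiable_bound_general[OF ab v_cont[OF a(1)]])
      show "continuous_on {a..b} ((*) \<epsilon>)" by (intro continuous_intros)
      fix x assume x: "a < x" "x < b"
      show "(v has_vector_derivative of_real (sinh x) * g x) (at x)" using x a by (intro v_deriv) simp
      show "(((*) \<epsilon>) has_vector_derivative \<epsilon>) (at x)"
        using DERIV_cmult[OF DERIV_ident, of \<epsilon>] by (simp add: has_real_derivative_iff_has_vector_derivative)
      have "sinh x > 0" using x a by simp
      then show "norm (of_real (sinh x) * g x) \<le> \<epsilon>" using vd[of x] x a b by (simp add: norm_mult)
    qed
    moreover have "cmod (v b) \<le> cmod (v a) + norm (v b - v a)"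
      by (metis norm_triangle_sub add.commute)
    ultimately show ?thesis using a eps unfolding c0_def by (simp add: algebra_simps)
      (smt (verit) a(1) eps mult_pos_pos)
  qed
  define k where "k = c0^2 / cosh b"
  have k: "k > 0" using c0 unfolding k_def by simp
  have flow: "f a \<ge> k / a" if a: "0 < a" "a \<le> b" for a
  proof -
    have r: "rr a > 0" "(rr a)^2 = sinh a" using rr_pos rr_sq a by auto
    have "(cmod (v a))^2 = f a * sinh a" using v_norm[of a] a r unfolding f_def by (simp add: power_mult_distrib)
    moreover have "c0^2 \<le> (cmod (v a))^2" using vlow[OF a] c0 by (intro power_mono) auto
    moreover have "sinh a \<le> a * cosh b"
    proof -
      have "sinh a \<le> a * cosh a" using sinh_le a by simp
      also have "\<dots> \<le> a * cosh b" using a by (intro mult_left_mono) (auto simp: cosh_real_nonneg_le_iff)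
      finally show ?thesis .
    qed
    ultimately have "c0^2 \<le> f a * (a * cosh b)"
      using f_nonneg[of a] by (smt (verit) mult_left_mono)
    then show ?thesis unfolding k_def using a cosh_real_ge_1[of b]
      by (simp add: field_simps)
  qed
  have intlow: "k * (ln b - ln a) \<le> M" if a: "0 < a" "a < b" for a
  proof -
    have "(\<lambda>t. integral {a..t} f - k * ln t) a \<le> (\<lambda>t. integral {a..t} f - k * ln t) b"
    proof (rule mono_aux[OF less_imp_le[OF a(2)]])
      have "continuous_on {a..b} ln" by (rule continuous_on_ln[OF continuous_on_id]) (use a in auto)
      then show "continuous_on {a..b} (\<lambda>t. integral {a..t} f - k * ln t)"
        by (intro continuous_on_diff continuous_on_mult continuous_on_const int_cont[OF a(1) f_cont])
      fix x assume x: "a < x" "x < b"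
      have dl: "DERIV ln x :> inverse x" using x a by (intro DERIV_ln) auto
      show "((\<lambda>t. integral {a..t} f - k * ln t) has_real_derivative f x - k * inverse x) (at x)"
        by (rule DERIV_diff[OF int_deriv[OF a(1) x(1) f_cont] DERIV_cmult[OF dl]])
      show "0 \<le> f x - k * inverse x" using flow[of x] x a by (simp add: divide_inverse)
    qed
    then have "k * (ln b - ln a) \<le> integral {a..b} f" by (simp add: algebra_simps)
    also have "\<dots> \<le> M" using F_le a by simp
    finally show ?thesis .
  qed
  define a where "a = b * exp (- (M / k) - 1)"
  have M0: "0 \<le> M" using F_le[of 1 1] by linarith
  then have "0 \<le> M / k" using k by simp
  then have a: "0 < a" "a < b" unfolding a_def using b k
    by (auto simp: mult_less_cancel_left1)
  have "ln a = ln b - M / k - 1" unfolding a_def using b by (simp add: ln_mult)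
  then have "k * (ln b - ln a) = M + k" using k by (simp add: field_simps)
  then show False using intlow[OF a] k by simp
qed

end


context sol begin

lemma h_bound_vg:
  assumes b: "b > 0"
  shows "cmod (h b) \<le> cmod (v b) * cmod (g b) + (cmod (v b))^2 * cosh b / (2 * (sinh b)^2)"
proof -
  have s: "sinh b > 0" using b by simp
  have r: "rr b > 0" "rr b * rr b = sinh b" using rr_pos[OF b] rr_sq[OF b] by (auto simp: power2_eq_square)
  have p1: "rho1 b * rr b = 1" using r unfolding rho1_def by simp
  have p2: "rho2 b > 0" using r s unfolding rho2_def by simp
  have w'e: "w' b = of_real (rr b) * (g b - w b * of_real (rho2 b))"
  proof -
    have "g b - w b * of_real (rho2 b) = w' b * of_real (rho1 b)" unfolding g_def by simp
    then have "of_real (rr b) * (g b - w b * of_real (rho2 b)) = w' b * of_real (rho1 b * rr b)"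
      by (simp add: algebra_simps)
    then show ?thesis using p1 by simp
  qed
  define V where "V = cmod (v b)"
  define G where "G = cmod (g b)"
  have wn: "cmod (w b) = V / rr b" using v_norm[OF b] r unfolding V_def by simp
  have "cmod (w' b) \<le> rr b * (G + cmod (w b) * rho2 b)"
  proof -
    have "cmod (w' b) = rr b * cmod (g b - w b * of_real (rho2 b))" using w'e r by (simp add: norm_mult)
    also have "cmod (g b - w b * of_real (rho2 b)) \<le> G + cmod (w b) * rho2 b"
      unfolding G_def using norm_triangle_ineq4[of "g b" "w b * of_real (rho2 b)"] p2 by (simp add: norm_mult)
    then have "rr b * cmod (g b - w b * of_real (rho2 b)) \<le> rr b * (G + cmod (w b) * rho2 b)"
      using r by (intro mult_left_mono) auto
    finally show ?thesis .
  qed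
  then have "cmod (h b) \<le> (V / rr b) * (rr b * (G + (V / rr b) * rho2 b))"
    unfolding h_norm wn using r by (intro mult_left_mono) (auto simp: V_def)
  also have "\<dots> = V * G + V^2 * (rho2 b / rr b)" using r s by (simp add: field_simps power2_eq_square)
  also have "rho2 b / rr b = cosh b / (2 * (sinh b)^2)" using r s unfolding rho2_def
    by (simp add: field_simps power2_eq_square)
  finally show ?thesis unfolding V_def G_def by simp
qed

lemma zero_lemma:
  assumes x3: "x3 > 0" and L: "L > 0" and hb: "\<And>a. 0 < a \<Longrightarrow> a \<le> x3 \<Longrightarrow> L \<le> cmod (h a)"
  shows False
proof -
  define A where "A = cmod (g x3) + cmod lam / 2 * M"
  define B where "B = cmod lam / 2"
  define Lam where "Lam t = A + B * (ln x3 - ln t)" for t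
  have gb: "cmod (g a) \<le> Lam a" if "0 < a" "a \<le> x3" for a
    using g_bound[OF x3 that] unfolding Lam_def A_def B_def by simp
  define \<epsilon> where "\<epsilon> = min 1 (L / (2 + cosh x3))"
  have ch: "2 + cosh x3 > 0" using cosh_real_ge_1[of x3] by simp
  have eps: "\<epsilon> > 0" "\<epsilon> \<le> 1" "\<epsilon> \<le> L / (2 + cosh x3)" unfolding \<epsilon>_def using L ch by auto
  have lim1: "((\<lambda>t. sinh t * Lam t) \<longlongrightarrow> 0) (at_right 0)" unfolding Lam_def by real_asymp
  have lim2: "((\<lambda>t. t * Lam t) \<longlongrightarrow> 0) (at_right 0)" unfolding Lam_def by real_asymp
  have "eventually (\<lambda>t. sinh t * Lam t < \<epsilon> \<and> t * Lam t < 1) (at_right 0)"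
    using order_tendstoD(2)[OF lim1 eps(1)] order_tendstoD(2)[OF lim2 zero_less_one]
    by (rule eventually_conj)
  then obtain bb where bb: "bb > 0" "\<And>y. 0 < y \<Longrightarrow> y < bb \<Longrightarrow> sinh y * Lam y < \<epsilon> \<and> y * Lam y < 1"
    unfolding eventually_at_right_field by auto
  define t1 where "t1 = min x3 (bb / 2)"
  have t1: "t1 > 0" "t1 \<le> x3" "t1 < bb" unfolding t1_def using x3 bb by auto
  have vd: "sinh t * cmod (g t) \<le> \<epsilon>" if "0 < t" "t \<le> t1" for t
  proof -
    have "sinh t * cmod (g t) \<le> sinh t * Lam t" using gb[of t] that t1 by (intro mult_left_mono) auto
    also have "\<dots> < \<epsilon>" using bb(2)[of t] that t1 by auto
    finally show ?thesis by simp
  qed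
  have vs: "cmod (v t1) \<le> \<epsilon> * t1" by (rule v_small[OF eps(1) t1(1) vd t1(1) order_refl])
  define V where "V = cmod (v t1)"
  define G where "G = cmod (g t1)"
  have V0: "0 \<le> V" unfolding V_def by simp
  have G0: "0 \<le> G" unfolding G_def by simp
  have GL: "G \<le> Lam t1" using gb[OF t1(1) t1(2)] unfolding G_def .
  have tL: "t1 * Lam t1 < 1" using bb(2)[of t1] t1 by auto
  have st: "t1 \<le> sinh t1" using sinh_ge[of t1] t1 by simp
  have s0: "sinh t1 > 0" using t1 by simp
  have c3: "cosh t1 \<le> cosh x3" using t1 x3 by (simp add: cosh_real_nonneg_le_iff)
  have T1: "V * G \<le> \<epsilon>"
  proof -
    have "V * G \<le> (\<epsilon> * t1) * Lam t1" using vs GL V0 G0 unfolding V_def[symmetric]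
      by (intro mult_mono) auto
    also have "\<dots> = \<epsilon> * (t1 * Lam t1)" by simp
    also have "\<dots> \<le> \<epsilon> * 1" using tL eps by (intro mult_left_mono) auto
    finally show ?thesis by simp
  qed
  have T2: "V^2 * cosh t1 / (2 * (sinh t1)^2) \<le> \<epsilon> * cosh x3 / 2"
  proof -
    have "V \<le> \<epsilon> * sinh t1" using vs st eps unfolding V_def[symmetric]
      by (smt (verit) mult_left_mono)
    then have "V^2 \<le> (\<epsilon> * sinh t1)^2" using V0 by (intro power_mono) auto
    then have "V^2 / (sinh t1)^2 \<le> \<epsilon>^2" using s0 by (simp add: field_simps power_mult_distrib)
    also have "\<dots> \<le> \<epsilon>" using eps by (simp add: power2_eq_square mult_le_cancel_left1)
    finally have q: "V^2 / (sinh t1)^2 \<le> \<epsilon>" .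
    have "V^2 * cosh t1 / (2 * (sinh t1)^2) = (V^2 / (sinh t1)^2) * cosh t1 / 2" by simp
    also have "\<dots> \<le> \<epsilon> * cosh x3 / 2"
      using q c3 eps cosh_real_ge_1[of t1] by (intro divide_right_mono mult_mono) auto
    finally show ?thesis .
  qed
  have "cmod (h t1) \<le> \<epsilon> + \<epsilon> * cosh x3 / 2"
    using h_bound_vg[OF t1(1)] T1 T2 unfolding V_def G_def by simp
  also have "\<dots> = \<epsilon> * (2 + cosh x3) / 2" by (simp add: field_simps)
  also have "\<dots> \<le> L / 2" using eps ch by (simp add: field_simps)
  finally show False using hb[OF t1(1) t1(2)] L by simp
qed

end


lemma deriv_cont:
  fixes F :: "real \<Rightarrow> real"
  assumes "\<And>x. a \<le> x \<Longrightarrow> x \<le> b \<Longrightarrow> (F has_real_derivative D x) (at x)"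
  shows "continuous_on {a..b} F"
proof (intro continuous_at_imp_continuous_on ballI)
  fix x assume "x \<in> {a..b}"
  then show "isCont F x" using assms DERIV_isCont by (metis atLeastAtMost_iff)
qed

lemma P_bounds: assumes "0 < x2" "x2 \<le> x" shows "1/4 \<le> P x" "P x \<le> P x2"
proof -
  have s: "0 < sinh x2" "sinh x2 \<le> sinh x" using assms by auto
  then have "(sinh x2)^2 \<le> (sinh x)^2" by (intro power_mono) auto
  then have "3/(4*(sinh x)^2) \<le> 3/(4*(sinh x2)^2)" using s by (intro divide_left_mono) auto
  then show "P x \<le> P x2" using assms by (simp add: P_eq)
  show "1/4 \<le> P x" using assms by (simp add: P_eq)
qed

context sol begin

lemma amgm: "cmod (h x) \<le> (f x + (cmod (w' x))\<^sup>2) / 2"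
proof -
  have "0 \<le> (cmod (w x) - cmod (w' x))\<^sup>2" by simp
  then show ?thesis unfolding h_norm f_def by (simp add: power2_eq_square algebra_simps)
qed

lemma inf_lemma:
  assumes x2: "x2 > 0" and dl: "\<delta> > 0" and hb: "\<And>x. x \<ge> x2 \<Longrightarrow> \<delta> \<le> cmod (h x)"
  shows False
proof -
  define K where "K = P x2 + \<bar>Re lam\<bar>"
  have Kb: "\<bar>P x - Re lam\<bar> \<le> K" if "x \<ge> x2" for x
    using P_bounds[OF x2 that] unfolding K_def by auto
  have K0: "0 \<le> K" using P_bounds[OF x2 order_refl] unfolding K_def by auto
  define F where "F t = integral {x2..t} f" for t
  define G where "G t = integral {x2..t} (\<lambda>x. (cmod (w' x))\<^sup>2)" for t
  have Fd: "(F has_real_derivative f x) (at x)" if "x > x2" for x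
    unfolding F_def[abs_def] by (rule int_deriv[OF x2 that f_cont])
  have Gd: "(G has_real_derivative (cmod (w' x))\<^sup>2) (at x)" if "x > x2" for x
    unfolding G_def[abs_def] by (rule int_deriv[OF x2 that w'sq_cont])
  have Fc: "continuous_on {x2..b} F" for b unfolding F_def[abs_def] by (rule int_cont[OF x2 f_cont])
  have Gc: "continuous_on {x2..b} G" for b unfolding G_def[abs_def] by (rule int_cont[OF x2 w'sq_cont])
  have FM: "F t \<le> M" "0 \<le> F t" for t unfolding F_def using F_le x2 by auto
  have F0: "F x2 = 0" "G x2 = 0" unfolding F_def G_def by simp_all
  have hc: "continuous_on {a..b} (\<lambda>x. Re (h x))" if "a > 0" for a b
    by (rule deriv_cont[OF Reh_deriv]) (use that in simp)
  have fc: "continuous_on {a..b} f" if "a > 0" for a b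
    by (rule deriv_cont[OF f_deriv]) (use that in simp)
  have Gmono: "G a \<le> G b" if "x2 \<le> a" "a \<le> b" for a b
  proof (rule mono_aux[OF that(2) _ Gd])
    show "continuous_on {a..b} G" using Gc by (rule continuous_on_subset) (use that in auto)
  qed (use that in auto)
  have step2: "Re (h x2) + G b - K * F b \<le> Re (h b)" if "b \<ge> x2" for b
  proof -
    have "(\<lambda>t. Re (h t) - G t + K * F t) x2 \<le> (\<lambda>t. Re (h t) - G t + K * F t) b"
    proof (rule mono_aux[OF that])
      show "continuous_on {x2..b} (\<lambda>t. Re (h t) - G t + K * F t)"
        by (intro continuous_intros hc x2 Gc Fc)
      fix x assume x: "x2 < x" "x < b"
      show "((\<lambda>t. Re (h t) - G t + K * F t) has_real_derivative
          ((cmod (w' x))\<^sup>2 + (P x - Re lam) * f x) - (cmod (w' x))\<^sup>2 + K * f x) (at x)"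
        by (rule derivative_eq_intros Reh_deriv Gd Fd refl | use x x2 in simp)+
      have "- (K * f x) \<le> (P x - Re lam) * f x"
        using Kb[of x] x f_nonneg[of x] abs_le_iff mult_right_mono
        by (smt (verit, ccfv_SIG) mult_minus_left)
      then show "0 \<le> ((cmod (w' x))\<^sup>2 + (P x - Re lam) * f x) - (cmod (w' x))\<^sup>2 + K * f x"
        by simp
    qed
    then show ?thesis using F0 by simp
  qed
  define C0 where "C0 = K * M - Re (h x2) + 1"
  have step3: "G b \<le> C0" if "b \<ge> x2" for b
  proof (rule ccontr)
    assume "\<not> G b \<le> C0"
    then have Gb: "G b > C0" by simp
    have hb1: "Re (h t) \<ge> 1" if "t \<ge> b" for t
    proof -
      have "G b \<le> G t" using Gmono \<open>b \<ge> x2\<close> that by blast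
      moreover have "K * F t \<le> K * M" using FM K0 by (simp add: mult_left_mono)
      moreover have "Re (h x2) + G t - K * F t \<le> Re (h t)" using step2 \<open>b \<ge> x2\<close> that by simp
      ultimately show ?thesis using Gb unfolding C0_def by simp
    qed
    have fb: "f t \<ge> 2 * (t - b)" if "t \<ge> b" for t
    proof -
      have "(\<lambda>t. f t - 2 * t) b \<le> (\<lambda>t. f t - 2 * t) t"
      proof (rule mono_aux[OF that])
        show "continuous_on {b..t} (\<lambda>t. f t - 2 * t)" by (intro continuous_intros fc) (use x2 \<open>b \<ge> x2\<close> in simp)
        fix x assume x: "b < x" "x < t"
        show "((\<lambda>t. f t - 2 * t) has_real_derivative 2 * Re (h x) - 2 * 1) (at x)"
          by (rule derivative_eq_intros f_deriv refl | use x x2 \<open>b \<ge> x2\<close> in simp)+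
        show "0 \<le> 2 * Re (h x) - 2 * 1" using hb1[of x] x by simp
      qed
      then show ?thesis using f_nonneg[of b] by simp
    qed
    have Fb: "F t \<ge> (t - b)\<^sup>2" if "t \<ge> b" for t
    proof -
      have "(\<lambda>t. F t - (t - b)\<^sup>2) b \<le> (\<lambda>t. F t - (t - b)\<^sup>2) t"
      proof (rule mono_aux[OF that])
        show "continuous_on {b..t} (\<lambda>t. F t - (t - b)\<^sup>2)"
          by (intro continuous_intros continuous_on_subset[OF Fc[of t]]) (use \<open>b \<ge> x2\<close> in auto)
        fix x assume x: "b < x" "x < t"
        show "((\<lambda>t. F t - (t - b)\<^sup>2) has_real_derivative f x - 2 * (x - b)) (at x)"
          by (rule derivative_eq_intros Fd refl | use x \<open>b \<ge> x2\<close> in simp)+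
        show "0 \<le> f x - 2 * (x - b)" using fb[of x] x by simp
      qed
      then show ?thesis using FM(2)[of b] by simp
    qed
    have M0: "0 \<le> M" using FM(2)[of x2] FM(1)[of x2] by simp
    have "(M + 1)\<^sup>2 \<le> F (b + M + 1)" using Fb[of "b + M + 1"] M0 by simp
    moreover have "M < (M + 1)\<^sup>2"
    proof -
      have "(M+1)^2 = M*M + 2*M + 1" by (simp add: power2_eq_square algebra_simps)
      then show ?thesis using zero_le_square[of M] M0 by linarith
    qed
    ultimately show False using FM(1)[of "b + M + 1"] by simp
  qed
  have step4: "\<delta> * (t - x2) \<le> (M + C0) / 2" if "t \<ge> x2" for t
  proof -
    have "(\<lambda>t. (F t + G t)/2 - \<delta> * (t - x2)) x2 \<le> (\<lambda>t. (F t + G t)/2 - \<delta> * (t - x2)) t"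
    proof (rule mono_aux[OF that])
      show "continuous_on {x2..t} (\<lambda>t. (F t + G t)/2 - \<delta> * (t - x2))"
        by (intro continuous_intros Fc Gc) auto
      fix x assume x: "x2 < x" "x < t"
      show "((\<lambda>t. (F t + G t)/2 - \<delta> * (t - x2)) has_real_derivative (f x + (cmod (w' x))\<^sup>2)/2 - \<delta> * (1 - 0)) (at x)"
        by (rule derivative_eq_intros Fd Gd refl | use x in simp)+
      show "0 \<le> (f x + (cmod (w' x))\<^sup>2)/2 - \<delta> * (1 - 0)" using amgm[of x] hb[of x] x by simp
    qed
    then show ?thesis using F0 FM(1)[of t] step3[OF that] by simp
  qed
  have e1: "\<delta> * ((x2 + \<bar>M + C0\<bar>/\<delta> + 1) - x2) \<le> (M + C0) / 2" using step4[of "x2 + \<bar>M + C0\<bar>/\<delta> + 1"] dl by simp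
  have e2: "\<delta> * ((x2 + \<bar>M + C0\<bar>/\<delta> + 1) - x2) = \<bar>M + C0\<bar> + \<delta>" using dl by (simp add: field_simps)
  have e3: "\<bar>M + C0\<bar> + \<delta> \<le> (M + C0) / 2" using e1 e2 by simp
  define A where "A = M + C0"
  have "\<bar>A\<bar> + \<delta> \<le> A / 2" using e3 unfolding A_def .
  then show False using dl abs_ge_self[of A] abs_ge_zero[of A] by linarith
qed

end


context sol begin

lemma fpos: "w x \<noteq> 0 \<Longrightarrow> f x > 0" unfolding f_def by simp

lemma caseA: assumes im: "Im lam \<noteq> 0" and x0: "x0 > 0" "w x0 \<noteq> 0" shows False
proof -
  define \<tau> where "\<tau> = sgn (Im lam)"
  have tl: "\<tau> * Im lam = \<bar>Im lam\<bar>" unfolding \<tau>_def by (simp add: sgn_if abs_if)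
  have ta: "\<bar>\<tau>\<bar> = 1" unfolding \<tau>_def using im by (simp add: abs_sgn)
  define T where "T t = \<tau> * Im (h t)" for t
  have Td: "(T has_real_derivative - (\<bar>Im lam\<bar> * f t)) (at t)" if "t > 0" for t
  proof -
    have "(T has_real_derivative \<tau> * (- (Im lam * f t))) (at t)"
      unfolding T_def[abs_def] by (rule DERIV_cmult[OF Imh_deriv[OF that]])
    moreover have "\<tau> * (- (Im lam * f t)) = - (\<bar>Im lam\<bar> * f t)"
      using tl by (simp add: mult.assoc[symmetric])
    ultimately show ?thesis by (rule DERIV_cong)
  qed
  have Tmono: "T b \<le> T a" if "0 < a" "a \<le> b" for a b
  proof -
    have "(\<lambda>t. - T t) a \<le> (\<lambda>t. - T t) b"
    proof (rule mono_aux[OF that(2)])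
      show "continuous_on {a..b} (\<lambda>t. - T t)"
        by (intro continuous_on_minus deriv_cont[where D="\<lambda>t. - (\<bar>Im lam\<bar> * f t)"] Td) (use that in simp)
      fix x assume x: "a < x" "x < b"
      show "((\<lambda>t. - T t) has_real_derivative \<bar>Im lam\<bar> * f x) (at x)"
        using DERIV_minus[OF Td[of x]] x that by simp
      show "0 \<le> \<bar>Im lam\<bar> * f x" using f_nonneg by simp
    qed
    then show ?thesis by simp
  qed
  have hT: "\<bar>T t\<bar> \<le> cmod (h t)" for t
    unfolding T_def abs_mult ta using abs_Im_le_cmod by simp
  have Tnn: "T x \<ge> 0" if "x > 0" for x
  proof (rule ccontr)
    assume "\<not> T x \<ge> 0"
    then have d: "- T x > 0" by simp
    show False
    proof (rule inf_lemma[OF that d])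
      fix y assume "y \<ge> x"
      then have "T y \<le> T x" using Tmono that by blast
      then show "- T x \<le> cmod (h y)" using hT[of y] by simp
    qed
  qed
  have Tx0: "T x0 > 0"
  proof (rule ccontr)
    assume "\<not> T x0 > 0"
    then have T0: "T x0 = 0" using Tnn[OF x0(1)] by simp
    have "- (\<bar>Im lam\<bar> * f x0) < 0" using im fpos[OF x0(2)] by simp
    from DERIV_neg_dec_right[OF Td[OF x0(1)] this]
    obtain d where d: "d > 0" "\<And>h. h > 0 \<Longrightarrow> h < d \<Longrightarrow> T x0 > T (x0 + h)" by auto
    have "T x0 > T (x0 + d/2)" using d by simp
    moreover have "T (x0 + d/2) \<ge> 0" using Tnn x0 d by simp
    ultimately show False using T0 by simp
  qed
  show False
  proof (rule zero_lemma[OF x0(1) Tx0])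
    fix a assume a: "0 < a" "a \<le> x0"
    then have "T x0 \<le> T a" using Tmono by blast
    then show "T x0 \<le> cmod (h a)" using hT[of a] by simp
  qed
qed

lemma caseB1: assumes re: "Re lam \<le> 1/4" and x0: "x0 > 0" "w x0 \<noteq> 0" shows False
proof -
  define R where "R t = Re (h t)" for t
  have Rd: "(R has_real_derivative (cmod (w' t))\<^sup>2 + (P t - Re lam) * f t) (at t)" if "t > 0" for t
    unfolding R_def[abs_def] by (rule Reh_deriv[OF that])
  have Pp: "P t > Re lam" if "t > 0" for t
  proof -
    have q: "3 / (4 * (sinh t)^2) > 0" using that by simp
    show ?thesis using P_eq[OF that] re q by linarith
  qed
  have Rd0: "0 \<le> (cmod (w' t))\<^sup>2 + (P t - Re lam) * f t" if "t > 0" for t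
    using Pp[OF that] f_nonneg[of t] by simp
  have Rmono: "R a \<le> R b" if "0 < a" "a \<le> b" for a b
  proof (rule mono_aux[OF that(2)])
    show "continuous_on {a..b} R"
      by (rule deriv_cont[OF Rd]) (use that in simp)
    fix x assume x: "a < x" "x < b"
    show "(R has_real_derivative (cmod (w' x))\<^sup>2 + (P x - Re lam) * f x) (at x)" using x that by (intro Rd) simp
    show "0 \<le> (cmod (w' x))\<^sup>2 + (P x - Re lam) * f x" using x that by (intro Rd0) simp
  qed
  have hR: "\<bar>R t\<bar> \<le> cmod (h t)" for t unfolding R_def by (rule abs_Re_le_cmod)
  have Rnp: "R x \<le> 0" if "x > 0" for x
  proof (rule ccontr)
    assume "\<not> R x \<le> 0"
    then have d: "R x > 0" by simp
    show False
    proof (rule inf_lemma[OF that d])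
      fix y assume "y \<ge> x"
      then have "R x \<le> R y" using Rmono that by blast
      then show "R x \<le> cmod (h y)" using hR[of y] by simp
    qed
  qed
  have Rx0: "- R x0 > 0"
  proof (rule ccontr)
    assume "\<not> - R x0 > 0"
    then have R0: "R x0 = 0" using Rnp[OF x0(1)] by simp
    have "0 < (cmod (w' x0))\<^sup>2 + (P x0 - Re lam) * f x0"
      using Pp[OF x0(1)] fpos[OF x0(2)] by (simp add: add_nonneg_pos)
    from DERIV_pos_inc_right[OF Rd[OF x0(1)] this]
    obtain d where d: "d > 0" "\<And>h. h > 0 \<Longrightarrow> h < d \<Longrightarrow> R x0 < R (x0 + h)" by auto
    have "R x0 < R (x0 + d/2)" using d by simp
    moreover have "R (x0 + d/2) \<le> 0" using Rnp x0 d by simp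
    ultimately show False using R0 by simp
  qed
  show False
  proof (rule zero_lemma[OF x0(1) Rx0])
    fix a assume a: "0 < a" "a \<le> x0"
    then have "R a \<le> R x0" using Rmono by blast
    then show "- R x0 \<le> cmod (h a)" using hR[of a] by simp
  qed
qed

end


lemma coth_deriv: assumes "t > 0"
  shows "((\<lambda>t. cosh t / sinh t) has_real_derivative - 1 / (sinh t)^2) (at t)"
proof -
  have s: "sinh t \<noteq> 0" using assms by simp
  from DERIV_quotient[OF cosh_d sinh_d s]
  have "((\<lambda>t. cosh t / sinh t) has_real_derivative (sinh t * sinh t - cosh t * cosh t) / (sinh t)^2) (at t)"
    by (simp add: power2_eq_square)
  moreover have "(sinh t * sinh t - cosh t * cosh t) = -1"
    using cosh_square_eq[of t] by (simp add: power2_eq_square)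
  ultimately show ?thesis by simp
qed

context sol begin

lemma w'sq_deriv: assumes im: "Im lam = 0" and t: "t > 0"
  shows "((\<lambda>t. (cmod (w' t))\<^sup>2) has_real_derivative 2 * (P t - Re lam) * Re (h t)) (at t)"
proof -
  have "((\<lambda>t. cnj (w' t) * w' t) has_vector_derivative cnj (w' t) * w'' t + cnj (w'' t) * w' t) (at t)"
    by (rule derivative_eq_intros d2 t refl)+
  from has_field_derivative_Re[OF this]
  have "((\<lambda>t. Re (cnj (w' t) * w' t)) has_real_derivative Re (cnj (w' t) * w'' t + cnj (w'' t) * w' t)) (at t)" .
  moreover have "(\<lambda>t. Re (cnj (w' t) * w' t)) = (\<lambda>t. (cmod (w' t))\<^sup>2)"
    by (simp add: fun_eq_iff cnj_sq)
  moreover have "Re (cnj (w' t) * w'' t + cnj (w'' t) * w' t) = 2 * (P t - Re lam) * Re (h t)"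
  proof -
    have l: "lam = of_real (Re lam)" using im by (simp add: complex_eq_iff)
    show ?thesis unfolding w2[OF t] h_def by (subst l, subst l) (simp add: algebra_simps)
  qed
  ultimately show ?thesis by simp
qed

lemma caseB2: assumes im: "Im lam = 0" and re: "Re lam > 1/4" and x0: "x0 > 0" "w x0 \<noteq> 0" shows False
proof -
  define \<mu> where "\<mu> = Re lam - 1/4"
  have mu: "\<mu> > 0" unfolding \<mu>_def using re by simp
  have smu: "sqrt \<mu> > 0" using mu by simp
  define \<kappa> where "\<kappa> = 3 / (4 * sqrt \<mu>)"
  have ka: "\<kappa> > 0" unfolding \<kappa>_def using smu by simp
  define \<theta> where "\<theta> t = \<kappa> * (cosh t / sinh t)" for t
  have thd: "(\<theta> has_real_derivative - (\<kappa> / (sinh t)^2)) (at t)" if "t > 0" for t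
    unfolding \<theta>_def[abs_def] using DERIV_cmult[OF coth_deriv[OF that], of \<kappa>] by simp
  have thnn: "\<theta> t \<ge> 0" if "t > 0" for t unfolding \<theta>_def using that ka by simp
  define E where "E t = \<mu> * f t + (cmod (w' t))\<^sup>2" for t
  define Q where "Q t = 2 * (P t - 1/4) * Re (h t)" for t
  have Ed: "(E has_real_derivative Q t) (at t)" if "t > 0" for t
  proof -
    have "(E has_real_derivative \<mu> * (2 * Re (h t)) + 2 * (P t - Re lam) * Re (h t)) (at t)"
      unfolding E_def[abs_def] by (rule DERIV_add[OF DERIV_cmult[OF f_deriv[OF that]] w'sq_deriv[OF im that]])
    moreover have "\<mu> * (2 * Re (h t)) + 2 * (P t - Re lam) * Re (h t) = Q t"
      unfolding Q_def \<mu>_def by (simp add: algebra_simps)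
    ultimately show ?thesis by simp
  qed
  have E0: "E t \<ge> 0" for t unfolding E_def using mu f_nonneg[of t] by simp
  have Qb: "\<bar>Q t\<bar> \<le> \<kappa> / (sinh t)^2 * E t" if t: "t > 0" for t
  proof -
    have q: "P t - 1/4 = 3 / (4 * (sinh t)^2)" using P_eq[OF t] by simp
    have qp: "P t - 1/4 \<ge> 0" unfolding q by simp
    have am: "sqrt \<mu> * cmod (w t) * cmod (w' t) \<le> E t / 2"
    proof -
      have "(sqrt \<mu> * cmod (w t)) * cmod (w' t) \<le> ((sqrt \<mu> * cmod (w t))^2 + (cmod (w' t))^2) / 2"
        by (rule amgm_real)
      also have "(sqrt \<mu> * cmod (w t))^2 = \<mu> * f t" using mu unfolding f_def by (simp add: power_mult_distrib)
      finally show ?thesis unfolding E_def by simp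
    qed
    have "\<bar>Q t\<bar> = 2 * (P t - 1/4) * \<bar>Re (h t)\<bar>" unfolding Q_def using qp by (simp add: abs_mult)
    also have "\<dots> \<le> 2 * (P t - 1/4) * (cmod (w t) * cmod (w' t))"
      using abs_Re_le_cmod[of "h t"] qp unfolding h_norm by (intro mult_left_mono) auto
    also have "\<dots> = 2 * (P t - 1/4) / sqrt \<mu> * (sqrt \<mu> * cmod (w t) * cmod (w' t))"
      using smu by (simp add: field_simps)
    also have "\<dots> \<le> 2 * (P t - 1/4) / sqrt \<mu> * (E t / 2)"
      using am qp smu by (intro mult_left_mono) auto
    also have "\<dots> = \<kappa> / (sinh t)^2 * E t" unfolding q \<kappa>_def using smu t by (simp add: field_simps)
    finally show ?thesis .
  qed
  have Ec: "continuous_on {a..b} E" if "a > 0" for a b by (rule deriv_cont[OF Ed]) (use that in simp)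
  have thc: "continuous_on {a..b} \<theta>" if "a > 0" for a b by (rule deriv_cont[OF thd]) (use that in simp)
  have low: "E x0 * exp (- \<theta> x0) \<le> E t" if t: "t \<ge> x0" for t
  proof -
    have "(\<lambda>t. E t * exp (- \<theta> t)) x0 \<le> (\<lambda>t. E t * exp (- \<theta> t)) t"
    proof (rule mono_aux[OF t])
      show "continuous_on {x0..t} (\<lambda>t. E t * exp (- \<theta> t))"
        by (intro continuous_on_mult continuous_on_exp continuous_on_minus Ec thc x0(1))
      fix x assume x: "x0 < x" "x < t"
      then have xp: "x > 0" using x0 by simp
      show "((\<lambda>t. E t * exp (- \<theta> t)) has_real_derivative
          Q x * exp (- \<theta> x) + (exp (- \<theta> x) * (- (- (\<kappa> / (sinh x)^2)))) * E x) (at x)"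
        by (rule DERIV_mult[OF Ed[OF xp] DERIV_fun_exp[OF DERIV_minus[OF thd[OF xp]]]])
      have "- (\<kappa> / (sinh x)^2 * E x) \<le> Q x" using Qb[OF xp] by linarith
      then have "0 \<le> Q x + \<kappa> / (sinh x)^2 * E x" by simp
      then have "0 \<le> exp (- \<theta> x) * (Q x + \<kappa> / (sinh x)^2 * E x)" by simp
      then show "0 \<le> Q x * exp (- \<theta> x) + (exp (- \<theta> x) * (- (- (\<kappa> / (sinh x)^2)))) * E x"
        by (simp add: algebra_simps)
    qed
    then have "E x0 * exp (- \<theta> x0) \<le> E t * exp (- \<theta> t)" by simp
    also have "\<dots> \<le> E t * 1" using E0[of t] thnn[of t] t x0 by (intro mult_left_mono) auto
    finally show ?thesis by simp
  qed
  have up: "E t \<le> E x0 * exp (\<theta> x0)" if t: "t \<ge> x0" for t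
  proof -
    have "(\<lambda>t. - (E t * exp (\<theta> t))) x0 \<le> (\<lambda>t. - (E t * exp (\<theta> t))) t"
    proof (rule mono_aux[OF t])
      show "continuous_on {x0..t} (\<lambda>t. - (E t * exp (\<theta> t)))"
        by (intro continuous_on_mult continuous_on_exp continuous_on_minus Ec thc x0(1))
      fix x assume x: "x0 < x" "x < t"
      then have xp: "x > 0" using x0 by simp
      show "((\<lambda>t. - (E t * exp (\<theta> t))) has_real_derivative
          - (Q x * exp (\<theta> x) + (exp (\<theta> x) * (- (\<kappa> / (sinh x)^2))) * E x)) (at x)"
        by (rule DERIV_minus[OF DERIV_mult[OF Ed[OF xp] DERIV_fun_exp[OF thd[OF xp]]]])
      have "Q x \<le> \<kappa> / (sinh x)^2 * E x" using Qb[OF xp] by linarith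
      then have "0 \<le> \<kappa> / (sinh x)^2 * E x - Q x" by simp
      then have "0 \<le> exp (\<theta> x) * (\<kappa> / (sinh x)^2 * E x - Q x)" by simp
      then show "0 \<le> - (Q x * exp (\<theta> x) + (exp (\<theta> x) * (- (\<kappa> / (sinh x)^2))) * E x)"
        by (simp add: algebra_simps)
    qed
    then have "E t * exp (\<theta> t) \<le> E x0 * exp (\<theta> x0)" by simp
    moreover have "E t * 1 \<le> E t * exp (\<theta> t)" using E0[of t] thnn[of t] t x0 by (intro mult_left_mono) auto
    ultimately show ?thesis by simp
  qed
  define e0 where "e0 = E x0 * exp (- \<theta> x0)"
  define E1 where "E1 = E x0 * exp (\<theta> x0)"
  have e0: "e0 > 0" unfolding e0_def E_def using mu fpos[OF x0(2)]
    by (intro mult_pos_pos) (simp_all add: add_pos_nonneg)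
  have hb: "Re (h t) \<le> E1 / (2 * sqrt \<mu>)" if t: "t \<ge> x0" for t
  proof -
    have "2 * sqrt \<mu> * (cmod (w t) * cmod (w' t)) \<le> E t"
    proof -
      have "(sqrt \<mu> * cmod (w t)) * cmod (w' t) \<le> ((sqrt \<mu> * cmod (w t))^2 + (cmod (w' t))^2) / 2"
        by (rule amgm_real)
      also have "(sqrt \<mu> * cmod (w t))^2 = \<mu> * f t" using mu unfolding f_def by (simp add: power_mult_distrib)
      finally show ?thesis unfolding E_def by simp
    qed
    also have "\<dots> \<le> E1" unfolding E1_def using up[OF t] .
    finally have "cmod (h t) \<le> E1 / (2 * sqrt \<mu>)" unfolding h_norm using smu by (simp add: field_simps)
    then show ?thesis using abs_Re_le_cmod[of "h t"] by simp
  qed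
  define F where "F t = integral {x0..t} f" for t
  have Fd: "(F has_real_derivative f x) (at x)" if "x > x0" for x
    unfolding F_def[abs_def] by (rule int_deriv[OF x0(1) that f_cont])
  have Fc: "continuous_on {x0..b} F" for b unfolding F_def[abs_def] by (rule int_cont[OF x0(1) f_cont])
  have hc: "continuous_on {a..b} (\<lambda>x. Re (h x))" if "a > 0" for a b
    by (rule deriv_cont[OF Reh_deriv]) (use that in simp)
  have Z: "Re (h x0) \<le> Re (h t) + 2 * \<mu> * F t - e0 * (t - x0)" if t: "t \<ge> x0" for t
  proof -
    have "(\<lambda>t. Re (h t) + 2 * \<mu> * F t - e0 * (t - x0)) x0 \<le> (\<lambda>t. Re (h t) + 2 * \<mu> * F t - e0 * (t - x0)) t"
    proof (rule mono_aux[OF t])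
      show "continuous_on {x0..t} (\<lambda>t. Re (h t) + 2 * \<mu> * F t - e0 * (t - x0))"
        by (intro continuous_on_add continuous_on_diff continuous_on_mult continuous_on_const continuous_on_id hc Fc x0(1))
      fix x assume x: "x0 < x" "x < t"
      then have xp: "x > 0" using x0 by simp
      have dl: "((\<lambda>t. t - x0) has_real_derivative 1 - 0) (at x)" by (rule DERIV_diff[OF DERIV_ident DERIV_const])
      show "((\<lambda>t. Re (h t) + 2 * \<mu> * F t - e0 * (t - x0)) has_real_derivative
          ((cmod (w' x))\<^sup>2 + (P x - Re lam) * f x) + 2 * \<mu> * f x - e0 * (1 - 0)) (at x)"
        by (rule DERIV_diff[OF DERIV_add[OF Reh_deriv[OF xp] DERIV_cmult[OF Fd[OF x(1)]]] DERIV_cmult[OF dl]])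
      have q: "P x - 1/4 \<ge> 0" using P_eq[OF xp] by simp
      have "((cmod (w' x))\<^sup>2 + (P x - Re lam) * f x) + 2 * \<mu> * f x = E x + (P x - 1/4) * f x"
        unfolding E_def \<mu>_def by (simp add: algebra_simps)
      moreover have "E x \<ge> e0" unfolding e0_def using low[of x] x by simp
      moreover have "(P x - 1/4) * f x \<ge> 0" using q f_nonneg[of x] by simp
      ultimately show "0 \<le> ((cmod (w' x))\<^sup>2 + (P x - Re lam) * f x) + 2 * \<mu> * f x - e0 * (1 - 0)"
        by simp
    qed
    then show ?thesis by (simp add: F_def)
  qed
  define C where "C = E1 / (2 * sqrt \<mu>) - Re (h x0) + 2 * \<mu> * M"
  have bound: "e0 * (t - x0) \<le> C" if t: "t \<ge> x0" for t
  proof -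
    have "F t \<le> M" unfolding F_def using F_le x0 by simp
    then have "2 * \<mu> * F t \<le> 2 * \<mu> * M" using mu by simp
    then show ?thesis using Z[OF t] hb[OF t] unfolding C_def by linarith
  qed
  have b1: "e0 * ((x0 + \<bar>C\<bar> / e0 + 1) - x0) \<le> C" by (rule bound) (use e0 in simp)
  have b2: "e0 * ((x0 + \<bar>C\<bar> / e0 + 1) - x0) = \<bar>C\<bar> + e0" using e0 by (simp add: field_simps)
  have "\<bar>C\<bar> + e0 \<le> C" using b1 b2 by simp
  then show False using e0 abs_ge_self[of C] by linarith
qed

end

theorem theoremA1:
  fixes lam :: complex
  shows "\<not> (\<exists>w w' w'' :: real \<Rightarrow> complex.
            (\<forall>x>0. (w has_vector_derivative w' x) (at x)) \<and>
            (\<forall>x>0. (w' has_vector_derivative w'' x) (at x)) \<and>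
            (\<forall>x>0. - w'' x + complex_of_real (P x) * w x = lam * w x) \<and>
            set_integrable lborel {0<..} (\<lambda>x. (cmod (w x))\<^sup>2) \<and>
            (\<exists>x>0. w x \<noteq> 0))"
proof
  assume "\<exists>w w' w'' :: real \<Rightarrow> complex.
            (\<forall>x>0. (w has_vector_derivative w' x) (at x)) \<and>
            (\<forall>x>0. (w' has_vector_derivative w'' x) (at x)) \<and>
            (\<forall>x>0. - w'' x + complex_of_real (P x) * w x = lam * w x) \<and>
            set_integrable lborel {0<..} (\<lambda>x. (cmod (w x))\<^sup>2) \<and>
            (\<exists>x>0. w x \<noteq> 0)"
  then obtain w w' w'' :: "real \<Rightarrow> complex" where
    a1: "\<forall>x>0. (w has_vector_derivative w' x) (at x)" and
    a2: "\<forall>x>0. (w' has_vector_derivative w'' x) (at x)" and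
    a3: "\<forall>x>0. - w'' x + complex_of_real (P x) * w x = lam * w x" and
    a4: "set_integrable lborel {0<..} (\<lambda>x. (cmod (w x))\<^sup>2)" and
    a5: "\<exists>x>0. w x \<noteq> 0"
    by blast
  interpret S: sol w w' w'' lam
    by (unfold_locales) (use a1 a2 a3 a4 in simp_all)
  obtain x0 where x0: "x0 > 0" "w x0 \<noteq> 0" using a5 by blast
  show False
  proof (cases "Im lam = 0")
    case False
    then show False by (rule S.caseA[OF _ x0])
  next
    case im: True
    show False
    proof (cases "Re lam \<le> 1/4")
      case True
      then show False by (rule S.caseB1[OF _ x0])
    next
      case False
      then show False using S.caseB2[OF im _ x0] by simp
    qed
  qed
qed

end
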